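(* Let $c\ge\lceil(2n-1)/3\rceil$ and let $\mathbf{s}_n\in\mathcal{B}(n,c,d)$ with $d=n-c$. Then $\mathbf{s}_n\in\mathcal{R}(n,c)$ if and only if $\mathbf{s}_{[d:n]}=(s_d,\dots,s_{n-1})$ cannot be expressed as $(s_0,s_1,\dots,s_{b-1})^l$ for any aperiodic sequence $(s_0,\dots,s_{b-1})$, where $b>1$ is a proper divisor of $c$.
   Context: All sequences are binary (entries in $\mathbb{Z}_2$), $\overline{x}=x\oplus1$, $x\bmod d$ is the least nonnegative residue, and $\mathbf{a}^q$ is the concatenation of $q$ copies of $\mathbf a$. For $\mathbf{s}_n=(s_0,\dots,s_{n-1})$, $\mathbf{s}_j=(s_0,\dots,s_{j-1})$ and $\mathbf{s}_{[i:j]}=(s_i,\dots,s_{j-1})$. A length-$m$ sequence is periodic if it is the concatenation of $m/e$ copies of a length-$e$ sequence for a proper divisor $e$ of $m$, aperiodic otherwise. Right circular shift: $R^k(\mathbf{s}_n)=(s_{n-k},\dots,s_{n-1},s_0,\dots,s_{n-k-1})$, $0\le k<n$. For $c\ge\lfloor n/2\rfloor$ and $1\le d\le\min\{n-c,\lfloor n/2\rfloor\}$, $\mathcal{B}(n,c,d)$ is the set of aperiodic length-$n$ sequences $\mathbf{s}_n$ with $\mathbf{s}_d$ aperiodic and $\mathbf{s}_{c+d}=(s_0,\dots,s_{d-1})^q(s_0,\dots,s_{r-1},\overline{s_r})$, where $q=\lfloor(c+d-1)/d\rfloor$, $r=c+d-1-qd$, and $s_{c+d},\dots,s_{n-1}$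 are arbitrary. $\mathcal{B}(n,c)=\bigcup_{d=1}^{\min\{n-c,\lfloor n/2\rfloor\}}\mathcal{B}(n,c,d)$. For $\mathbf{s}_n\in\mathcal{B}(n,c,d)$, $add(\mathbf{s}_n)$ is the integer $t\ge0$ such that $s_{n-1-i}=s_{(d-1-i)\bmod d}$ for $0\le i<t$ and $s_{n-1-t}\neq s_{(d-1-t)\bmod d}$. For $\mathbf{s}_n\in\mathcal{B}(n,c)$, $E(\mathbf{s}_n)=\{R^k(\mathbf{s}_n):0\le k<n\}\cap\mathcal{B}(n,c)$, and $\mathcal{R}(n,c)$ is the set of all $\mathbf{s}\in\mathcal{B}(n,c)$ with $add(\mathbf{s})\ge add(\mathbf a)$ for every $\mathbf a\in E(\mathbf s)$ (the sequence representatives). *)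

theory Defs
  imports Main
begin

text \<open>Binary sequences are lists of booleans (False = 0, True = 1); complement is Not.\<close>

definition periodic :: "bool list \<Rightarrow> bool" where
  "periodic s \<longleftrightarrow> (\<exists>e. 0 < e \<and> e < length s \<and> e dvd length s \<and>
       s = concat (replicate (length s div e) (take e s)))"

definition aperiodic :: "bool list \<Rightarrow> bool" where
  "aperiodic s \<longleftrightarrow> \<not> periodic s"

definition rshift :: "nat \<Rightarrow> bool list \<Rightarrow> bool list" where
  "rshift k s = drop (length s - k) s @ take (length s - k) s"

definition Bd :: "nat \<Rightarrow> nat \<Rightarrow> nat \<Rightarrow> bool list set" where
  "Bd n c d = {s. n div 2 \<le> c \<and> 1 \<le> d \<and> d \<le> min (n - c) (n div 2) \<and>
      length s = n \<and> aperiodic s \<and> aperiodic (take d s) \<and>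
      (let q = (c + d - 1) div d; r = c + d - 1 - q * d in
        take (c + d) s = concat (replicate q (take d s)) @ take r s @ [\<not> s ! r])}"

definition B :: "nat \<Rightarrow> nat \<Rightarrow> bool list set" where
  "B n c = (\<Union>d\<in>{1..min (n - c) (n div 2)}. Bd n c d)"

text \<open>add(s) for s in B(n,c,d): the least t with s_{n-1-t} \<noteq> s_{(d-1-t) mod d}
  (indices taken as least nonnegative residues); value n if no such t < n exists.\<close>
definition add :: "nat \<Rightarrow> bool list \<Rightarrow> nat" where
  "add d s = (LEAST t. length s \<le> t \<or>
      s ! (length s - 1 - t) \<noteq> s ! nat ((int d - 1 - int t) mod int d))"

definition E :: "nat \<Rightarrow> nat \<Rightarrow> bool list \<Rightarrow> bool list set" where
  "E n c s = {rshift k s | k. k < n} \<inter> B n c"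

text \<open>Sequence representatives R(n,c). The d with s in B(n,c,d) is unique, so add of an
  element of B(n,c) is taken w.r.t. any (the) d for which it lies in B(n,c,d).\<close>
definition R :: "nat \<Rightarrow> nat \<Rightarrow> bool list set" where
  "R n c = {s. s \<in> B n c \<and> (\<forall>a\<in>E n c s. \<forall>d1 d2.
      s \<in> Bd n c d1 \<longrightarrow> a \<in> Bd n c d2 \<longrightarrow> add d2 a \<le> add d1 s)}"

end

theory Submission
  imports Defs
begin

lemma per_mod_int:
  fixes f :: "int \<Rightarrow> 'a"
  assumes p: "0 < p" and per: "\<forall>z. 0 \<le> z \<longrightarrow> z + p < L \<longrightarrow> f z = f (z + p)"
  shows "0 \<le> z \<Longrightarrow> z < L \<Longrightarrow> f z = f (z mod p)"
proof (induction "nat z" arbitrary: z rule: less_induct)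
  case less
  show ?case
  proof (cases "z < p")
    case True
    then show ?thesis using less.prems by simp
  next
    case False
    have h1: "f (z - p) = f ((z - p) mod p)"
      using less.hyps[of "z - p"] less.prems False p by auto
    have h2: "f (z - p) = f z" using per[rule_format, of "z - p"] less.prems False by auto
    have h3: "(z - p) mod p = z mod p" by (simp add: mod_diff_right_eq[symmetric])
    show ?thesis using h1 h2 h3 by simp
  qed
qed

lemma FW_step:
  fixes f :: "int \<Rightarrow> 'a"
  assumes pq: "0 < p" "p < q"
    and P: "\<forall>z. 0 \<le> z \<longrightarrow> z + p < L \<longrightarrow> f z = f (z + p)"
    and Q: "\<forall>z. 0 \<le> z \<longrightarrow> z + q < L \<longrightarrow> f z = f (z + q)"
    and len: "p + q - gcd p q \<le> L"
    and IH: "(\<forall>z. 0 \<le> z \<longrightarrow> z + p < L - p \<longrightarrow> f z = f (z + p)) \<Longrightarrow>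
             (\<forall>z. 0 \<le> z \<longrightarrow> z + (q - p) < L - p \<longrightarrow> f z = f (z + (q - p))) \<Longrightarrow>
             (\<forall>z. 0 \<le> z \<longrightarrow> z + gcd p (q - p) < L - p \<longrightarrow> f z = f (z + gcd p (q - p)))"
  shows "\<forall>z. 0 \<le> z \<longrightarrow> z + gcd p q < L \<longrightarrow> f z = f (z + gcd p q)"
proof -
  define g where "g = gcd p q"
  have gg: "gcd p (q - p) = g" unfolding g_def
    by (metis gcd.commute gcd_diff1)
  have gpos: "0 < g" using pq unfolding g_def by simp
  have gdvd: "g dvd p" "g dvd q - p" unfolding g_def by auto
  have gle: "g \<le> q - p" using gdvd(2) pq by (simp add: zdvd_imp_le)
  have A1: "\<forall>z. 0 \<le> z \<longrightarrow> z + p < L - p \<longrightarrow> f z = f (z + p)"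
  proof (intro allI impI)
    fix z assume z: "0 \<le> z" "z + p < L - p"
    then have "z + p < L" using pq by linarith
    then show "f z = f (z + p)" using P z by blast
  qed
  have A2: "\<forall>z. 0 \<le> z \<longrightarrow> z + (q - p) < L - p \<longrightarrow> f z = f (z + (q - p))"
  proof (intro allI impI)
    fix z assume z: "0 \<le> z" "z + (q - p) < L - p"
    have "f z = f (z + q)" using Q z by auto
    moreover have "f (z + (q - p)) = f (z + (q - p) + p)" using P z pq by auto
    ultimately show "f z = f (z + (q - p))" by simp
  qed
  have G: "\<forall>z. 0 \<le> z \<longrightarrow> z + g < L - p \<longrightarrow> f z = f (z + g)"
    using IH[OF A1 A2] gg by simp
  have pL: "p \<le> L - p" using len gle unfolding g_def by linarith
  show ?thesis unfolding g_def[symmetric]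
  proof (intro allI impI)
    fix z assume z: "0 \<le> z" "z + g < L"
    have e1: "f z = f (z mod p)" using per_mod_int[OF pq(1) P] z gpos by auto
    have e2: "f (z + g) = f ((z + g) mod p)" using per_mod_int[OF pq(1) P] z gpos by auto
    have "z mod p < p" "(z + g) mod p < p" using pq by auto
    moreover have "0 \<le> z mod p" "0 \<le> (z + g) mod p" using pq by auto
    ultimately have m1: "0 \<le> z mod p" "z mod p < L - p" and m2: "0 \<le> (z + g) mod p" "(z + g) mod p < L - p"
      using pL by linarith+
    have e3: "f (z mod p) = f (z mod p mod g)" using per_mod_int[OF gpos G] m1 by auto
    have e4: "f ((z + g) mod p) = f ((z + g) mod p mod g)" using per_mod_int[OF gpos G] m2 by auto
    have e5: "z mod p mod g = z mod g" using gdvd(1) by (simp add: mod_mod_cancel)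
    have e6: "(z + g) mod p mod g = z mod g" using gdvd(1) by (simp add: mod_mod_cancel)
    show "f z = f (z + g)" using e1 e2 e3 e4 e5 e6 by simp
  qed
qed

lemma FW:
  fixes f :: "int \<Rightarrow> 'a"
  shows "0 < p \<Longrightarrow> 0 < q \<Longrightarrow> (\<forall>z. 0 \<le> z \<longrightarrow> z + p < L \<longrightarrow> f z = f (z + p)) \<Longrightarrow>
    (\<forall>z. 0 \<le> z \<longrightarrow> z + q < L \<longrightarrow> f z = f (z + q)) \<Longrightarrow> p + q - gcd p q \<le> L \<Longrightarrow>
    (\<forall>z. 0 \<le> z \<longrightarrow> z + gcd p q < L \<longrightarrow> f z = f (z + gcd p q))"
proof (induction "nat (p + q)" arbitrary: p q L rule: less_induct)
  case less
  consider "p = q" | "p < q" | "q < p" by linarith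
  then show ?case
  proof cases
    case 1
    then show ?thesis using less.prems by simp
  next
    case 2
    show ?thesis
      apply (rule FW_step[OF less.prems(1) 2 less.prems(3) less.prems(4) less.prems(5)])
      apply (rule less.hyps[of p "q - p"])
      using less.prems 2 apply auto
      apply (metis gcd.commute gcd_diff1 less.prems(5) diff_le_eq add.commute diff_diff_eq2 diff_add_cancel add_diff_eq)
      done
  next
    case 3
    have gcdq: "gcd q (p - q) = gcd p q" by (metis gcd.commute gcd_diff1)
    have "\<forall>z. 0 \<le> z \<longrightarrow> z + gcd q p < L \<longrightarrow> f z = f (z + gcd q p)"
      apply (rule FW_step[OF less.prems(2) 3 less.prems(4) less.prems(3)])
      using less.prems(5) apply (simp add: gcd.commute algebra_simps)
      apply (rule less.hyps[of q "p - q"])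
      using less.prems 3 gcdq apply (auto simp: gcd.commute)
      done
    then show ?thesis by (simp add: gcd.commute)
  qed
qed

lemma core:
  fixes W :: "int \<Rightarrow> bool" and n c d d2 k0 :: int
  assumes per: "\<forall>z. W (z + n) = W z"
  and nd: "n = c + d" and d2: "1 \<le> d2" "d2 \<le> d" and cd: "2*d - 1 \<le> c" "d + 1 \<le> c"
  and F1: "\<forall>z. d \<le> z \<longrightarrow> z < n - 1 \<longrightarrow> W z = W (z - d)"
  and F2: "W (n - 1) \<noteq> W (n - 1 - d)"
  and U: "\<forall>g. 0 < g \<longrightarrow> g < d \<longrightarrow> g dvd d \<longrightarrow> \<not> (\<forall>z. 0 \<le> z \<longrightarrow> z + g < d \<longrightarrow> W z = W (z + g))"
  and H3: "\<forall>z. k0 - c + 1 \<le> z \<longrightarrow> z < k0 \<longrightarrow> W z = W (z - d2)"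
  and H4: "W k0 \<noteq> W (k0 - d2)"
  and k0: "0 \<le> k0" "k0 < n"
  shows "d2 = d \<and> k0 = n - 1"
proof -
  have Pm1: "W (-1) = W (n - 1)" using per[rule_format, of "-1"] by simp
  have Pm1d: "W (-1 - d) = W (n - 1 - d)" using per[rule_format, of "-1 - d"] by (simp add: algebra_simps)
  have Pm1d2: "W (-1 - d2) = W (n - 1 - d2)" using per[rule_format, of "-1 - d2"] by (simp add: algebra_simps)
  have F2': "W (-1) \<noteq> W (-1 - d)" using F2 Pm1 Pm1d by simp
  show ?thesis
  proof (cases "d2 = d")
    case True
    show ?thesis
    proof (rule ccontr)
      assume nk: "\<not> (d2 = d \<and> k0 = n - 1)"
      then have kn: "k0 \<noteq> n - 1" using True by simp
      show False
      proof (cases "d \<le> k0")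
        case True
        have "W k0 = W (k0 - d)" using F1[rule_format, of k0] True kn k0 by simp
        then show False using H4 \<open>d2 = d\<close> by simp
      next
        case False
        have "W (-1) = W (-1 - d2)" using H3[rule_format, of "-1"] False k0 cd nd d2 by simp
        then show False using F2' True by simp
      qed
    qed
  next
    case False
    then have d2lt: "d2 < d" using d2 by simp
    define g where "g = gcd d d2"
    have gpos: "0 < g" using d2 unfolding g_def by simp
    have gdvd: "g dvd d" "g dvd d2" unfolding g_def by auto
    have gle: "g \<le> d2" using gdvd(2) d2 by (simp add: zdvd_imp_le)
    have nalpha: "\<not> (d + d2 \<le> k0 \<and> k0 < n - 1)"
    proof
      assume a: "d + d2 \<le> k0 \<and> k0 < n - 1"
      have e1: "W k0 = W (k0 - d)" using F1[rule_format, of k0] a d2 by simp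
      have e2: "W (k0 - d2) = W (k0 - d - d2)" using F1[rule_format, of "k0 - d2"] a d2 by (simp add: algebra_simps)
      have e3: "W (k0 - d) = W (k0 - d - d2)" using H3[rule_format, of "k0 - d"] a d2 cd by simp
      show False using e1 e2 e3 H4 by metis
    qed
    show ?thesis
    proof (cases "k0 = n - 1")
      case True
      define f where "f = (\<lambda>z. W (d - d2 + z))"
      have Pd: "\<forall>z. 0 \<le> z \<longrightarrow> z + d < c + d2 - 1 \<longrightarrow> f z = f (z + d)"
      proof (intro allI impI)
        fix z assume z: "0 \<le> z" "z + d < c + d2 - 1"
        have "W (d - d2 + z + d) = W (d - d2 + z + d - d)"
          using F1[rule_format, of "d - d2 + z + d"] z d2 nd by simp
        then show "f z = f (z + d)" unfolding f_def by (simp add: algebra_simps)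
      qed
      have Pd2: "\<forall>z. 0 \<le> z \<longrightarrow> z + d2 < c + d2 - 1 \<longrightarrow> f z = f (z + d2)"
      proof (intro allI impI)
        fix z assume z: "0 \<le> z" "z + d2 < c + d2 - 1"
        have "W (d + z) = W (d + z - d2)"
          using H3[rule_format, of "d + z"] z d2 nd True by simp
        then show "f z = f (z + d2)" unfolding f_def by (simp add: algebra_simps)
      qed
      have len: "d + d2 - gcd d d2 \<le> c + d2 - 1" using gpos cd unfolding g_def by linarith
      have G: "\<forall>z. 0 \<le> z \<longrightarrow> z + g < c + d2 - 1 \<longrightarrow> f z = f (z + g)"
        unfolding g_def by (rule FW[OF _ _ Pd Pd2 len]) (use d2 in linarith)+
      have "\<forall>z. 0 \<le> z \<longrightarrow> z + g < d \<longrightarrow> W z = W (z + g)"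
      proof (intro allI impI)
        fix z assume z: "0 \<le> z" "z + g < d"
        have e1: "W (z + d) = W (z + d - d)" using F1[rule_format, of "z + d"] z nd cd gpos by simp
        have e2: "W (z + g + d) = W (z + g + d - d)" using F1[rule_format, of "z + g + d"] z nd cd gpos by simp
        have e3: "f (z + d2) = f (z + d2 + g)" using G[rule_format, of "z + d2"] z d2 cd by simp
        then have e3': "W (z + d) = W (z + g + d)" unfolding f_def by (simp add: algebra_simps)
        show "W z = W (z + g)" using e1 e2 e3' by simp
      qed
      then have False using U[rule_format, of g] gpos gle d2lt gdvd by simp
      then show ?thesis ..
    next
      case False
      have kl: "k0 < d + d2" using nalpha False k0 by linarith
      have nd_ : "\<not> (d + d2 - g \<le> k0)"
      proof
        assume kk: "d + d2 - g \<le> k0"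
        have Pd: "\<forall>z. 0 \<le> z \<longrightarrow> z + d < k0 \<longrightarrow> W z = W (z + d)"
        proof (intro allI impI)
          fix z assume z: "0 \<le> z" "z + d < k0"
          show "W z = W (z + d)" using F1[rule_format, of "z + d"] z nd cd kl d2 by simp
        qed
        have Pd2: "\<forall>z. 0 \<le> z \<longrightarrow> z + d2 < k0 \<longrightarrow> W z = W (z + d2)"
        proof (intro allI impI)
          fix z assume z: "0 \<le> z" "z + d2 < k0"
          show "W z = W (z + d2)" using H3[rule_format, of "z + d2"] z nd cd kl d2 by simp
        qed
        have len: "d + d2 - gcd d d2 \<le> k0" using kk unfolding g_def by linarith
        have G: "\<forall>z. 0 \<le> z \<longrightarrow> z + g < k0 \<longrightarrow> W z = W (z + g)"
          unfolding g_def by (rule FW[OF _ _ Pd Pd2 len]) (use d2 in linarith)+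
        have "\<forall>z. 0 \<le> z \<longrightarrow> z + g < d \<longrightarrow> W z = W (z + g)"
        proof (intro allI impI)
          fix z assume z: "0 \<le> z" "z + g < d"
          then have "z + g < k0" using kk gle by linarith
          then show "W z = W (z + g)" using G z by blast
        qed
        then show False using U[rule_format, of g] gpos gle d2lt gdvd by simp
      qed
      define p1 where "p1 = c + d2 - 2 - k0"
      have na: "\<not> (d + d2 - g \<le> p1)"
      proof
        assume pp: "d + d2 - g \<le> p1"
        define f where "f = (\<lambda>z. W (k0 - c - d2 + 1 + z))"
        have Pd: "\<forall>z. 0 \<le> z \<longrightarrow> z + d < p1 \<longrightarrow> f z = f (z + d)"
        proof (intro allI impI)
          fix z assume z: "0 \<le> z" "z + d < p1"
          define y where "y = k0 - c - d2 + 1 + z + d"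
          have y1: "W y = W (y + n)" using per by simp
          have y2: "W (y - d) = W (y - d + n)" using per by simp
          have y3: "W (y + n) = W (y + n - d)"
            using F1[rule_format, of "y + n"] z nd cd k0 d2 unfolding y_def p1_def by simp
          have "W (y - d) = W y" using y1 y2 y3 by (simp add: algebra_simps)
          then show "f z = f (z + d)" unfolding f_def y_def by (simp add: algebra_simps)
        qed
        have Pd2: "\<forall>z. 0 \<le> z \<longrightarrow> z + d2 < p1 \<longrightarrow> f z = f (z + d2)"
        proof (intro allI impI)
          fix z assume z: "0 \<le> z" "z + d2 < p1"
          have "W (k0 - c - d2 + 1 + z + d2) = W (k0 - c - d2 + 1 + z + d2 - d2)"
            using H3[rule_format, of "k0 - c - d2 + 1 + z + d2"] z k0 unfolding p1_def by simp
          then show "f z = f (z + d2)" unfolding f_def by (simp add: algebra_simps)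
        qed
        have len: "d + d2 - gcd d d2 \<le> p1" using pp unfolding g_def by linarith
        have G: "\<forall>z. 0 \<le> z \<longrightarrow> z + g < p1 \<longrightarrow> f z = f (z + g)"
          unfolding g_def by (rule FW[OF _ _ Pd Pd2 len]) (use d2 in linarith)+
        have m1: "f (p1 - d2) = f ((p1 - d2) mod g)"
          by (rule per_mod_int[OF gpos G, of "p1 - d2"]) (use pp gle d2lt d2 in linarith)+
        have m2: "f (p1 - d) = f ((p1 - d) mod g)"
          by (rule per_mod_int[OF gpos G, of "p1 - d"]) (use pp gle d2lt d2 in linarith)+
        have "g dvd d - d2" using gdvd by simp
        then obtain t where t: "d - d2 = g * t" by (auto elim: dvdE)
        have eq: "p1 - d2 = (p1 - d) + g * t" using t by simp
        have m3: "(p1 - d2) mod g = (p1 - d) mod g" unfolding eq by simp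
        have fW1: "f (p1 - d2) = W (-1 - d2)" unfolding f_def p1_def by (simp add: algebra_simps)
        have fW2: "f (p1 - d) = W (-1 - d)" unfolding f_def p1_def by (simp add: algebra_simps)
        have sl: "W (-1) = W (-1 - d2)" using H3[rule_format, of "-1"] pp gle k0 d2lt unfolding p1_def by simp
        show False using m1 m2 m3 fW1 fW2 sl F2' by simp
      qed
      have p1d2: "d2 \<le> p1" using na nd_ gpos d2lt cd unfolding p1_def by linarith
      have sl: "W (-1) = W (-1 - d2)" using H3[rule_format, of "-1"] p1d2 k0 unfolding p1_def by simp
      have e: "W (c - 1) \<noteq> W (c - 1 - d2)"
      proof -
        have "W (n - 1 - d2) = W (n - 1 - d2 - d)" using F1[rule_format, of "n - 1 - d2"] nd cd d2 by simp
        moreover have "n - 1 - d2 - d = c - 1 - d2" using nd by simp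
        moreover have "n - 1 - d = c - 1" using nd by simp
        ultimately show ?thesis using Pm1d2 sl Pm1 F2 by metis
      qed
      have kc: "k0 \<le> c - 1"
      proof (rule ccontr)
        assume "\<not> k0 \<le> c - 1"
        then have "W (c - 1) = W (c - 1 - d2)" using H3[rule_format, of "c - 1"] kl cd d2 by simp
        then show False using e by simp
      qed
      have kb: "c - d \<le> k0" using na gpos unfolding p1_def by linarith
      show ?thesis
      proof (cases "d + d2 \<le> c - 1")
        case True
        have e1: "W (c - 1) = W (c - 1 - d)" using F1[rule_format, of "c - 1"] True nd d2 by simp
        have e2: "W (c - 1 - d2) = W (c - 1 - d - d2)" using F1[rule_format, of "c - 1 - d2"] True nd d2 by (simp add: algebra_simps)
        have e3: "W (c - 1 - d) = W (c - 1 - d - d2)" using H3[rule_format, of "c - 1 - d"] kc kb cd by simp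
        have False using e1 e2 e3 e by metis
        then show ?thesis ..
      next
        case False
        have cc: "c = 2*d - 1" "d2 = d - 1" using False cd d2lt by linarith+
        have e1: "W (d2 - 1) = W (-1)" using H3[rule_format, of "d2 - 1"] kc kb cc d2 by simp
        have e2: "W (c - 1) = W (c - 1 - d)" using F1[rule_format, of "c - 1"] cc nd d2 by simp
        have "c - 1 - d = d2 - 1" "n - 1 - d = c - 1" using cc nd by simp_all
        then have False using e1 e2 F2 Pm1 by metis
        then show ?thesis ..
      qed
    qed
  qed
qed

lemma nth_concat_replicate:
  "i < k * length xs \<Longrightarrow> concat (replicate k xs) ! i = xs ! (i mod length xs)"
proof (induction k arbitrary: i)
  case 0 then show ?case by simp
next
  case (Suc k)
  show ?case
  proof (cases "i < length xs")
    case True then show ?thesis by (simp add: nth_append)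
  next
    case False
    then have "concat (replicate k xs) ! (i - length xs) = xs ! ((i - length xs) mod length xs)"
      using Suc by auto
    moreover have "(i - length xs) mod length xs = i mod length xs"
      using False by (simp add: le_mod_geq)
    ultimately show ?thesis using False by (simp add: nth_append)
  qed
qed

lemma Bd_facts:
  assumes "s \<in> Bd n c d" "1 \<le> c"
  shows "length s = n" "1 \<le> d" "d \<le> n - c" "n div 2 \<le> c" "aperiodic s" "aperiodic (take d s)"
    "\<forall>i. i < c + d - 1 \<longrightarrow> s ! i = s ! (i mod d)" "s ! (c + d - 1) \<noteq> s ! (c - 1)"
proof -
  define q where "q = (c + d - 1) div d"
  define r where "r = c + d - 1 - q * d"
  have B: "n div 2 \<le> c \<and> 1 \<le> d \<and> d \<le> min (n - c) (n div 2) \<and>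
      length s = n \<and> aperiodic s \<and> aperiodic (take d s) \<and>
      take (c + d) s = concat (replicate q (take d s)) @ take r s @ [\<not> s ! r]"
    using assms(1) unfolding Bd_def q_def r_def Let_def by simp
  then show "length s = n" "1 \<le> d" "d \<le> n - c" "n div 2 \<le> c" "aperiodic s" "aperiodic (take d s)"
    by auto
  have len: "length s = n" "1 \<le> d" "d \<le> n - c" using B by auto
  have cdn: "c + d \<le> n" using len assms(2) by linarith
  have qle: "q * d \<le> c + d - 1" unfolding q_def by (rule div_times_less_eq_dividend)
  have qd: "q * d + r = c + d - 1" using qle unfolding r_def by linarith
  have rmod: "r = (c + d - 1) mod d" unfolding r_def q_def by (simp add: minus_div_mult_eq_mod)
  have rd: "r < d" using rmod len by simp
  have lu: "length (take d s) = d" using len cdn by simp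
  have lc: "length (concat (replicate q (take d s))) = q * d" using lu by (induction q) auto
  have T: "take (c + d) s = concat (replicate q (take d s)) @ take r s @ [\<not> s ! r]" using B by simp
  have nthT: "s ! i = (concat (replicate q (take d s)) @ take r s @ [\<not> s ! r]) ! i" if "i < c + d" for i
    using T that by (metis nth_take)
  show per: "\<forall>i. i < c + d - 1 \<longrightarrow> s ! i = s ! (i mod d)"
  proof (intro allI impI)
    fix i assume i: "i < c + d - 1"
    show "s ! i = s ! (i mod d)"
    proof (cases "i < q * d")
      case True
      have "s ! i = concat (replicate q (take d s)) ! i" using nthT[of i] i True lu lc by (simp add: nth_append)
      also have "\<dots> = take d s ! (i mod d)" using nth_concat_replicate[of i q "take d s"] True lu by simp
      also have "\<dots> = s ! (i mod d)" using len by simp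
      finally show ?thesis .
    next
      case False
      have ir: "i - q * d < r" using False i qd by linarith
      have "s ! i = take r s ! (i - q * d)" using nthT[of i] i False lu lc ir rd len cdn by (simp add: nth_append)
      also have "\<dots> = s ! (i - q * d)" using ir by simp
      also have "i - q * d = i mod d"
      proof -
        have "i = q * d + (i - q * d)" using False by simp
        then have "i mod d = (q * d + (i - q * d)) mod d" by simp
        also have "\<dots> = (i - q * d) mod d" by simp
        also have "\<dots> = i - q * d" using ir rd by simp
        finally show ?thesis by simp
      qed
      finally show ?thesis .
    qed
  qed
  have last0: "s ! (q * d + r) = (\<not> s ! r)"
  proof -
    have lt: "q * d + r < c + d" using qd len by linarith
    have lr: "length (take r s) = r" using rd len cdn by simp
    show ?thesis using nthT[OF lt] lc lr by (simp add: nth_append)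
  qed
  have last: "s ! (c + d - 1) = (\<not> s ! r)" using last0 qd by simp
  have "s ! (c - 1) = s ! ((c - 1) mod d)" using per len assms(2) by simp
  moreover have "(c - 1) mod d = r"
  proof -
    have "c + d - 1 = (c - 1) + d" using assms(2) by simp
    then show ?thesis using rmod by simp
  qed
  ultimately show "s ! (c + d - 1) \<noteq> s ! (c - 1)" using last by simp
qed

lemma rshift_nth:
  assumes "k < length s" "i < length s"
  shows "rshift k s ! i = s ! ((i + (length s - k)) mod length s)"
proof (cases "i < k")
  case True
  then have "(i + (length s - k)) mod length s = length s - k + i" using assms by simp
  then show ?thesis using True assms unfolding rshift_def by (simp add: nth_append)
next
  case False
  then have "(i + (length s - k)) mod length s = i - k" using assms
    by (simp add: le_mod_geq)
  then show ?thesis using False assms unfolding rshift_def by (simp add: nth_append)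
qed

lemma length_rshift: "k \<le> length s \<Longrightarrow> length (rshift k s) = length s"
  unfolding rshift_def by simp

lemma length_concat_replicate: "length (concat (replicate l xs)) = l * length xs"
  by (induction l) auto

lemma modshift: "(z - X mod (n::int) + X) mod n = z mod n"
proof -
  have "X div n * n + X mod n = X" by (rule div_mult_mod_eq)
  then have eq: "z - X mod n + X = z + (X div n) * n" by linarith
  show ?thesis unfolding eq by simp
qed

lemma rshift_0: "rshift 0 s = s" unfolding rshift_def by simp

lemma rot_unique:
  fixes s :: "bool list"
  assumes sB: "s \<in> Bd n c d" and dn: "d = n - c" and cd: "2 * d \<le> c + 1" and c2: "2 \<le> c"
    and k: "k < n" and aB: "rshift k s \<in> Bd n c d2"
  shows "d2 = d \<and> k = 0"
proof -
  have c1: "1 \<le> c" using c2 by simp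
  note sf = Bd_facts[OF sB c1]
  define a where "a = rshift k s"
  have la: "length a = n" unfolding a_def using length_rshift[of k s] k sf(1) by simp
  note af = Bd_facts[OF aB[folded a_def] c1]
  have d1: "1 \<le> d" using sf by simp
  have n: "n = c + d" using dn d1 by simp
  have d2d: "d2 \<le> d" using af(3) dn by simp
  have d21: "1 \<le> d2" using af(2) .
  define W where "W = (\<lambda>z::int. s ! nat (z mod int n))"
  have npos: "0 < n" using n c2 by simp
  have Ws: "W (int i) = s ! i" if "i < n" for i
    using that unfolding W_def by (simp add: zmod_int[symmetric])
  have Wmod: "W z = W z'" if "z mod int n = z' mod int n" for z z'
    using that unfolding W_def by simp
  have Wa: "a ! i = W (int i + int n - int k)" if "i < n" for i
  proof -
    have "a ! i = s ! ((i + (n - k)) mod n)" unfolding a_def using rshift_nth[of k s i] k that sf(1) by simp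
    moreover have "int ((i + (n - k)) mod n) = (int i + int n - int k) mod int n"
      using k by (simp add: zmod_int of_nat_diff)
    moreover have "W (int i + int n - int k) = s ! nat ((int i + int n - int k) mod int n)"
      unfolding W_def by simp
    ultimately show ?thesis by (metis nat_int)
  qed
  define m where "m = c + d2 - 1"
  define X where "X = int n - int k + int m"
  define k0 where "k0 = X mod int n"
  have core_res: "int d2 = int d \<and> k0 = int n - 1"
  proof (rule core[of W "int n" "int c" "int d" "int d2" k0])
    show "\<forall>z. W (z + int n) = W z"
    proof
      fix z show "W (z + int n) = W z" by (rule Wmod) simp
    qed
    show "int n = int c + int d" using n by simp
    show "1 \<le> int d2" "int d2 \<le> int d" using d21 d2d by simp_all
    show "2 * int d - 1 \<le> int c" "int d + 1 \<le> int c" using cd c2 d1 by linarith+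
    show "\<forall>z. int d \<le> z \<longrightarrow> z < int n - 1 \<longrightarrow> W z = W (z - int d)"
    proof (intro allI impI)
      fix z assume z: "int d \<le> z" "z < int n - 1"
      define i where "i = nat z"
      have zi: "z = int i" "d \<le> i" "i < c + d - 1" using z n unfolding i_def by linarith+
      have "s ! i = s ! (i mod d)" using sf(7) zi by simp
      moreover have "s ! (i - d) = s ! ((i - d) mod d)" using sf(7) zi by simp
      moreover have "(i - d) mod d = i mod d" using zi by (simp add: le_mod_geq)
      moreover have "W z = s ! i" using Ws zi n by simp
      moreover have "W (z - int d) = s ! (i - d)" using Ws[of "i - d"] zi n by (simp add: of_nat_diff)
      ultimately show "W z = W (z - int d)" by simp
    qed
    show "W (int n - 1) \<noteq> W (int n - 1 - int d)"
    proof -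
      have "W (int n - 1) = s ! (c + d - 1)" using Ws[of "c + d - 1"] n c1 by (simp add: of_nat_diff)
      moreover have "W (int n - 1 - int d) = s ! (c - 1)" using Ws[of "c - 1"] n c1 by (simp add: of_nat_diff)
      ultimately show ?thesis using sf(8) by simp
    qed
    show "\<forall>g. 0 < g \<longrightarrow> g < int d \<longrightarrow> g dvd int d \<longrightarrow> \<not> (\<forall>z. 0 \<le> z \<longrightarrow> z + g < int d \<longrightarrow> W z = W (z + g))"
    proof (intro allI impI notI)
      fix g assume g: "0 < g" "g < int d" "g dvd int d" and P: "\<forall>z. 0 \<le> z \<longrightarrow> z + g < int d \<longrightarrow> W z = W (z + g)"
      define e where "e = nat g"
      have ge1: "g = int e" using g unfolding e_def by simp
      have ge: "g = int e" "0 < e" "e < d" "e dvd d" using g ge1 by auto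
      have "periodic (take d s)"
        unfolding periodic_def
      proof (intro exI conjI)
        show "0 < e" using ge by simp
        show "e < length (take d s)" using ge sf(1) n by simp
        show "e dvd length (take d s)" using ge sf(1) n by simp
        show "take d s = concat (replicate (length (take d s) div e) (take e (take d s)))"
        proof (rule nth_equalityI)
          have ltd: "length (take d s) = d" using sf(1) n by simp
          show "length (take d s) = length (concat (replicate (length (take d s) div e) (take e (take d s))))"
            using ltd ge by (simp add: length_concat_replicate)
          fix i assume i: "i < length (take d s)"
          then have id: "i < d" using ltd by simp
          have "concat (replicate (length (take d s) div e) (take e (take d s))) ! i = take e (take d s) ! (i mod e)"
            using nth_concat_replicate[of i "length (take d s) div e" "take e (take d s)"] id ge ltd by simp
          also have "\<dots> = s ! (i mod e)" using ge id by simp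
          also have "\<dots> = W (int (i mod e))" using Ws[of "i mod e"] ge id n
          proof -
            have "i mod e < e" using ge by simp
            then have "i mod e < n" using ge id n by linarith
            then show ?thesis using Ws by simp
          qed
          also have "\<dots> = W (int i)"
          proof -
            have "W (int i) = W (int i mod g)" by (rule per_mod_int[OF g(1) P]) (use id in simp_all)
            then show ?thesis using ge by (simp add: zmod_int)
          qed
          also have "\<dots> = s ! i" using Ws[of i] id n by simp
          also have "\<dots> = take d s ! i" using id by simp
          finally show "take d s ! i = concat (replicate (length (take d s) div e) (take e (take d s))) ! i" by simp
        qed
      qed
      then show False using sf(6) unfolding aperiodic_def by simp
    qed
    have mn: "m < n" using d2d n c1 unfolding m_def by simp
    show "\<forall>z. k0 - int c + 1 \<le> z \<longrightarrow> z < k0 \<longrightarrow> W z = W (z - int d2)"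
    proof (intro allI impI)
      fix z assume z: "k0 - int c + 1 \<le> z" "z < k0"
      define i where "i = nat (z - k0 + int m)"
      have zi: "int i = z - k0 + int m" "d2 \<le> i" "i < m" using z d21 c1 unfolding i_def m_def by linarith+
      have "a ! i = a ! (i mod d2)" using af(7) zi unfolding m_def by simp
      moreover have "a ! (i - d2) = a ! ((i - d2) mod d2)" using af(7) zi unfolding m_def by simp
      moreover have "(i - d2) mod d2 = i mod d2" using zi by (simp add: le_mod_geq)
      moreover have "a ! i = W z"
      proof -
        have "a ! i = W (int i + int n - int k)" using Wa zi mn by simp
        moreover have "(int i + int n - int k) mod int n = z mod int n"
        proof -
          have eq: "int i + int n - int k = z - X mod int n + X" using zi(1) unfolding k0_def X_def by linarith
          show ?thesis unfolding eq by (rule modshift)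
        qed
        ultimately show ?thesis by (metis Wmod)
      qed
      moreover have "a ! (i - d2) = W (z - int d2)"
      proof -
        have "a ! (i - d2) = W (int (i - d2) + int n - int k)" using Wa zi mn by simp
        moreover have "(int (i - d2) + int n - int k) mod int n = (z - int d2) mod int n"
        proof -
          have eq: "int (i - d2) + int n - int k = (z - int d2) - X mod int n + X" using zi unfolding k0_def X_def by linarith
          show ?thesis unfolding eq by (rule modshift)
        qed
        ultimately show ?thesis by (metis Wmod)
      qed
      ultimately show "W z = W (z - int d2)" by simp
    qed
    show "W k0 \<noteq> W (k0 - int d2)"
    proof -
      have c1m: "c - 1 < n" using n c1 by simp
      have "a ! m = W k0"
      proof -
        have "a ! m = W (int m + int n - int k)" using Wa mn by simp
        moreover have "(int m + int n - int k) mod int n = k0 mod int n"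
          unfolding k0_def X_def by (simp add: algebra_simps)
        ultimately show ?thesis by (metis Wmod)
      qed
      moreover have "a ! (c - 1) = W (k0 - int d2)"
      proof -
        have "a ! (c - 1) = W (int (c - 1) + int n - int k)" using Wa c1m by simp
        moreover have "(int (c - 1) + int n - int k) mod int n = (k0 - int d2) mod int n"
          unfolding k0_def X_def m_def using c1 d21 by (simp add: algebra_simps of_nat_diff mod_diff_left_eq)
        ultimately show ?thesis by (metis Wmod)
      qed
      ultimately show ?thesis using af(8) unfolding m_def by simp
    qed
    show "0 \<le> k0" "k0 < int n" unfolding k0_def using npos by simp_all
  qed
  have dd: "d2 = d" using core_res by simp
  have "k = 0"
  proof (rule ccontr)
    assume k0n: "k \<noteq> 0"
    have mm: "int m = int n - 1" unfolding m_def using dd n c1 by simp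
    have X1: "int n \<le> X" "X < 2 * int n" unfolding X_def using mm k k0n by linarith+
    have e1: "X mod int n = (X - int n) mod int n" by simp
    have e2: "(X - int n) mod int n = X - int n" using X1 by (intro mod_pos_pos_trivial) auto
    have "k0 = X - int n" unfolding k0_def using e1 e2 by simp
    then show False using core_res unfolding X_def using mm k0n by linarith
  qed
  then show ?thesis using dd by simp
qed

theorem proposition1:
  fixes n c :: nat and s :: "bool list"
  assumes "3 * int c \<ge> 2 * int n - 1"
    and "s \<in> Bd n c (n - c)"
  shows "s \<in> R n c \<longleftrightarrow>
    \<not> (\<exists>b l. 1 < b \<and> b < c \<and> b dvd c \<and> aperiodic (take b s) \<and>
          drop (n - c) s = concat (replicate l (take b s)))"
proof -
  define d where "d = n - c"
  have sB: "s \<in> Bd n c d" using assms(2) unfolding d_def .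
  have B0: "n div 2 \<le> c \<and> 1 \<le> d \<and> d \<le> min (n - c) (n div 2) \<and> length s = n"
    using sB unfolding Bd_def by simp
  have c1: "1 \<le> c" using B0 by linarith
  note sf = Bd_facts[OF sB c1]
  have d1: "1 \<le> d" using B0 by simp
  have n: "n = c + d" using d1 unfolding d_def by simp
  have cd: "2 * d \<le> c + 1" using assms(1) n by linarith
  have rhs: "\<not> (\<exists>b l. 1 < b \<and> b < c \<and> b dvd c \<and> aperiodic (take b s) \<and>
          drop (n - c) s = concat (replicate l (take b s)))"
  proof
    assume "\<exists>b l. 1 < b \<and> b < c \<and> b dvd c \<and> aperiodic (take b s) \<and>
          drop (n - c) s = concat (replicate l (take b s))"
    then obtain b l where bl: "1 < b" "b < c" "drop d s = concat (replicate l (take b s))"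
      unfolding d_def by blast
    have lv: "length (take b s) = b" using bl sf(1) n by simp
    have "length (drop d s) = c" using sf(1) n by simp
    then have lb: "l * b = c" using bl(3) lv by (simp add: length_concat_replicate)
    have l2: "2 \<le> l"
    proof (rule ccontr)
      assume "\<not> 2 \<le> l"
      then have "l = 0 \<or> l = 1" by linarith
      then show False using lb bl by auto
    qed
    have b2: "2 * b \<le> c" using lb l2 by (metis mult_le_mono1)
    have tail: "s ! (d + i) = s ! (i mod b)" if "i < c" for i
    proof -
      have "s ! (d + i) = drop d s ! i" using that sf(1) n by simp
      also have "\<dots> = take b s ! (i mod b)" using bl(3) nth_concat_replicate[of i l "take b s"] lv lb that by simp
      also have "\<dots> = s ! (i mod b)" using bl by simp
      finally show ?thesis .
    qed
    define f where "f = (\<lambda>z::int. s ! (d + nat z))"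
    define g where "g = gcd (int b) (int d)"
    have gpos: "0 < g" unfolding g_def using bl by simp
    have gdvd: "g dvd int b" "g dvd int d" unfolding g_def by auto
    have Pb: "\<forall>z. 0 \<le> z \<longrightarrow> z + int b < int c - 1 \<longrightarrow> f z = f (z + int b)"
    proof (intro allI impI)
      fix z assume z: "0 \<le> z" "z + int b < int c - 1"
      have "f z = s ! (nat z mod b)" unfolding f_def using tail[of "nat z"] z by simp
      moreover have "f (z + int b) = s ! ((nat z + b) mod b)" unfolding f_def using tail[of "nat z + b"] z
        by (simp add: nat_add_distrib algebra_simps)
      ultimately show "f z = f (z + int b)" by simp
    qed
    have Pd: "\<forall>z. 0 \<le> z \<longrightarrow> z + int d < int c - 1 \<longrightarrow> f z = f (z + int d)"
    proof (intro allI impI)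
      fix z assume z: "0 \<le> z" "z + int d < int c - 1"
      have "f z = s ! ((d + nat z) mod d)" unfolding f_def using sf(7) z by simp
      moreover have "f (z + int d) = s ! ((d + (nat z + d)) mod d)" unfolding f_def using sf(7) z
        by (simp add: nat_add_distrib algebra_simps)
      moreover have "(d + (nat z + d)) mod d = (d + nat z) mod d" by simp
      ultimately show "f z = f (z + int d)" by simp
    qed
    have len: "int b + int d - gcd (int b) (int d) \<le> int c - 1"
    proof (rule ccontr)
      assume "\<not> ?thesis"
      then have "int c \<le> int b + int d - 1" using gpos unfolding g_def by linarith
      then show False using b2 cd by linarith
    qed
    have G: "\<forall>z. 0 \<le> z \<longrightarrow> z + g < int c - 1 \<longrightarrow> f z = f (z + g)"
      unfolding g_def by (rule FW[OF _ _ Pb Pd len]) (use bl d1 in simp_all)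
    have cdd: "d + 1 \<le> c" using cd d1 c1 bl by linarith
    have m1: "f (int c - 1 - int b) = f ((int c - 1 - int b) mod g)"
      by (rule per_mod_int[OF gpos G]) (use bl d1 in simp_all)
    have m2: "f (int c - 1 - int d) = f ((int c - 1 - int d) mod g)"
      by (rule per_mod_int[OF gpos G]) (use cdd d1 in simp_all)
    have m3: "(int c - 1 - int b) mod g = (int c - 1 - int d) mod g"
    proof -
      have "g dvd int d - int b" using gdvd by simp
      then obtain t where t: "int d - int b = g * t" by (auto elim: dvdE)
      have eq: "int c - 1 - int b = (int c - 1 - int d) + g * t" using t by simp
      show ?thesis unfolding eq by simp
    qed
    have f1: "f (int c - 1 - int b) = s ! (c + d - 1)"
    proof -
      have "f (int c - 1 - int b) = s ! ((c - 1 - b) mod b)" unfolding f_def using tail[of "c - 1 - b"] bl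
        by (simp add: nat_diff_distrib of_nat_diff)
      moreover have "s ! (c + d - 1) = s ! ((c - 1) mod b)" using tail[of "c - 1"] bl by (simp add: algebra_simps)
      moreover have "(c - 1 - b) mod b = (c - 1) mod b" using b2 by (simp add: le_mod_geq)
      ultimately show ?thesis by simp
    qed
    have f2: "f (int c - 1 - int d) = s ! (c - 1)"
    proof -
      have "nat (int c - 1 - int d) = c - 1 - d" using cdd by linarith
      then show ?thesis unfolding f_def using cdd by simp
    qed
    show False using m1 m2 m3 f1 f2 sf(8) by simp
  qed
  have inB: "s \<in> B n c" unfolding B_def using sB B0 by auto
  have inR: "s \<in> R n c"
    unfolding R_def
  proof (intro CollectI conjI ballI allI impI)
    show "s \<in> B n c" by (rule inB)
    fix a d1' d2' assume aE: "a \<in> E n c s" and s1: "s \<in> Bd n c d1'" and a2: "a \<in> Bd n c d2'"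
    obtain k where k: "k < n" "a = rshift k s" using aE unfolding E_def by blast
    show "add d2' a \<le> add d1' s"
    proof (cases "c = 1")
      case True
      have ad: "length a = n" "1 \<le> d2'" "d2' \<le> n - c" "a ! (c + d2' - 1) \<noteq> a ! (c - 1)"
        using Bd_facts[OF a2 c1] by auto
      have dd: "d2' = 1" "n = 2" using ad True n cd d1 by linarith+
      have "add d2' a = 0"
        unfolding add_def using ad dd True by (intro Least_eq_0) simp
      then show ?thesis by simp
    next
      case False
      then have c2: "2 \<le> c" using c1 by simp
      have r1: "d2' = d \<and> k = 0" using rot_unique[OF sB d_def cd c2 k(1)] a2 k(2) by simp
      have r2: "d1' = d" using rot_unique[OF sB d_def cd c2, of 0 d1'] s1 rshift_0 n c1 by simp
      show ?thesis using r1 r2 k(2) rshift_0 by simp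
    qed
  qed
  show ?thesis using rhs inR by simp
qed

end
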